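(* Let $N\ge1$, $q$ generic and $s=(s_1,\dots,s_N)$ indeterminates. For every $\theta=(\theta_1,\dots,\theta_N)\in\mathbb{Z}_{\ge0}^N$, the coefficients $e^{B_N/A_{N-1}}_{\theta}(s|q)$ satisfy \[ \sum_{i=1}^N \left( (1-q^{-\theta_i})s_i+(1-q^{\theta_i})s_i^{-1}\right)e^{B_N/A_{N-1}}_{\theta}(s|q) =\sum_{k=1}^N s_N\frac{(-1)^{N-k+1}q^{-\theta_N+\delta_{k,N}}q^{N-k} \prod_{i=k+1}^{N-1}(q^{-\theta_i+\theta_k-1}s_i/s_k)}{\prod_{i=k+1}^{N}(1-q^{-\theta_i+\theta_k -1 } s_i/s_k)(1-q\, q^{-\theta_i+\theta_k-1} s_i/s_k)}\, e^{B_N/A_{N-1}}_{(\theta_1,\ldots, \theta_k-1,\ldots, \theta_N)}(s|q), \] where $\delta_{k,N}$ is the Kronecker delta and empty products equal $1$.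
   Context: Notation: $(a;q)_n:=\prod_{k=1}^n(1-q^{k-1}a)$. For $\theta\in\mathbb{Z}_{\ge0}^N$, \[ e^{B_N/A_{N-1}}_{\theta}(s|q):=\prod_{k=1}^N\frac{q^{(N-k+1)\theta_k}}{(q;q)_{\theta_k}(q/s_k^2;q)_{\theta_k}}\prod_{1\leq i<j\leq N}\frac{1}{(q s_j/s_i;q)_{\theta_i}\,(q^{\theta_j-\theta_i} q s_i/s_j;q)_{\theta_i}}\cdot\frac{(q/s_is_j;q)_{\theta_i+\theta_j}}{(q/s_is_j;q)_{\theta_i}\,(q/s_is_j;q)_{\theta_j}}, \] and $e^{B_N/A_{N-1}}_{\theta}(s|q):=0$ if some entry of $\theta$ is negative. *)

theory Defs
  imports Complex_Main
begin

definition qpoch :: "complex \<Rightarrow> complex \<Rightarrow> nat \<Rightarrow> complex" where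
  "qpoch a q n = (\<Prod>k\<in>{1..n}. (1 - q ^ (k - 1) * a))"

(* e^{B_N/A_{N-1}}_theta(s|q); indices 1..N, theta and s are functions on nat,
   only the values at 1..N matter. Zero if some entry of theta is negative. *)
definition eBA :: "nat \<Rightarrow> (nat \<Rightarrow> int) \<Rightarrow> (nat \<Rightarrow> complex) \<Rightarrow> complex \<Rightarrow> complex" where
  "eBA N \<theta> s q =
    (if \<exists>k\<in>{1..N}. \<theta> k < 0 then 0 else
      (\<Prod>k\<in>{1..N}. q ^ ((N - k + 1) * nat (\<theta> k))
          / (qpoch q q (nat (\<theta> k)) * qpoch (q / (s k)\<^sup>2) q (nat (\<theta> k))))
      * (\<Prod>i\<in>{1..N}. \<Prod>j\<in>{i+1..N}.
          1 / (qpoch (q * s j / s i) q (nat (\<theta> i))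
               * qpoch (q powi (\<theta> j - \<theta> i) * q * s i / s j) q (nat (\<theta> i)))
          * (qpoch (q / (s i * s j)) q (nat (\<theta> i + \<theta> j))
             / (qpoch (q / (s i * s j)) q (nat (\<theta> i)) * qpoch (q / (s i * s j)) q (nat (\<theta> j))))))"

end

theory Submission
  imports Defs "HOL-Computational_Algebra.Polynomial"
begin

lemma qpoch_Suc: "qpoch a q (Suc n) = qpoch a q n * (1 - q^n * a)"
  unfolding qpoch_def by (simp add: atLeastAtMostSuc_conv mult.commute)

lemma qpoch_Suc': "qpoch a q (Suc n) = (1 - a) * qpoch (q*a) q n"
proof (induction n)
  case 0
  then show ?case by (simp add: qpoch_def)
next
  case (Suc n)
  have "qpoch a q (Suc (Suc n)) = qpoch a q (Suc n) * (1 - q^Suc n * a)" by (rule qpoch_Suc)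
  also have "\<dots> = (1 - a) * (qpoch (q*a) q n * (1 - q^n * (q*a)))" using Suc by (simp add: mult_ac)
  also have "\<dots> = (1 - a) * qpoch (q*a) q (Suc n)" by (simp add: qpoch_Suc)
  finally show ?case .
qed

lemma qpoch_nz: assumes "\<forall>c::nat. q^c * a \<noteq> 1" shows "qpoch a q n \<noteq> 0"
  unfolding qpoch_def using assms by (auto simp: prod_zero_iff)

lemma lin_prod:
  fixes a :: "nat \<Rightarrow> complex"
  assumes "finite I"
  shows "degree (\<Prod>j\<in>I. [:-a j, 1:]) = card I \<and> coeff (\<Prod>j\<in>I. [:-a j, 1:]) (card I) = 1
     \<and> (\<forall>n. card I = Suc n \<longrightarrow> coeff (\<Prod>j\<in>I. [:-a j, 1:]) n = - (\<Sum>j\<in>I. a j))"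
  using assms
proof (induction I rule: finite_induct)
  case empty
  then show ?case by simp
next
  case (insert x F)
  let ?Q = "\<Prod>j\<in>F. [:-a j, 1:]"
  have eq: "(\<Prod>j\<in>insert x F. [:-a j, 1:]) = [:-a x, 1:] * ?Q"
    using insert by simp
  have Q0: "?Q \<noteq> 0" using insert.IH by auto
  have "degree ([:-a x, 1:] * ?Q) = degree [:-a x, 1:] + degree ?Q"
    by (rule degree_mult_eq) (use Q0 in auto)
  then have d: "degree ([:-a x, 1:] * ?Q) = Suc (card F)"
    using insert.IH by simp
  have c1: "coeff ([:-a x, 1:] * ?Q) (Suc (card F)) = 1"
    using insert.IH by (simp add: coeff_eq_0)
  have c2: "coeff ([:-a x, 1:] * ?Q) (card F) = - (\<Sum>j\<in>insert x F. a j)"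
  proof (cases "card F")
    case 0
    then have "F = {}" using insert.hyps by simp
    then show ?thesis by simp
  next
    case (Suc m)
    then show ?thesis using insert.IH insert.hyps by simp
  qed
  show ?case using eq d c1 c2 insert.hyps by simp
qed

lemma lagrange_sum:
  fixes W S :: "nat \<Rightarrow> complex" and I :: "nat set"
  assumes fin: "finite I" and inj: "inj_on W I"
  shows "(\<Sum>k\<in>I. (\<Prod>j\<in>I. W k - S j) / (\<Prod>j\<in>I-{k}. W k - W j)) = (\<Sum>i\<in>I. W i) - (\<Sum>i\<in>I. S i)"
proof (cases "I = {}")
  case True
  then show ?thesis by simp
next
  case False
  then obtain n where cI: "card I = Suc n" using fin by (metis card_0_eq not0_implies_Suc)
  define P where "P = (\<Prod>j\<in>I. [:-S j, 1:])"
  define Pi where "Pi = (\<Prod>j\<in>I. [:-W j, 1:])"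
  define r where "r = P - Pi"
  have LP: "degree P = Suc n" "coeff P (Suc n) = 1" "coeff P n = - (\<Sum>j\<in>I. S j)"
    using lin_prod[OF fin, of S] cI unfolding P_def by auto
  have LPi: "degree Pi = Suc n" "coeff Pi (Suc n) = 1" "coeff Pi n = - (\<Sum>j\<in>I. W j)"
    using lin_prod[OF fin, of W] cI unfolding Pi_def by auto
  have dr: "degree r \<le> n"
  proof (rule degree_le, intro allI impI)
    fix i assume "n < i"
    then consider "i = Suc n" | "i > Suc n" by linarith
    then show "coeff r i = 0"
      by cases (auto simp: r_def LP LPi coeff_eq_0)
  qed
  have cr: "coeff r n = (\<Sum>i\<in>I. W i) - (\<Sum>i\<in>I. S i)"
    by (simp add: r_def LP LPi)
  have polyr: "poly r (W k) = (\<Prod>j\<in>I. W k - S j)" if "k \<in> I" for k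
  proof -
    have "poly Pi (W k) = 0" unfolding Pi_def poly_prod
      using that fin by (auto intro: prod_zero)
    then show ?thesis by (simp add: r_def P_def poly_prod)
  qed
  define c where "c k = poly r (W k) / (\<Prod>j\<in>I-{k}. W k - W j)" for k
  define L where "L = (\<Sum>k\<in>I. smult (c k) (\<Prod>j\<in>I-{k}. [:-W j, 1:]))"
  have cardk: "card (I - {k}) = n" if "k \<in> I" for k using that cI fin by simp
  have dL: "degree L \<le> n"
    unfolding L_def
  proof (rule degree_sum_le[OF fin])
    fix k assume "k \<in> I"
    then show "degree (smult (c k) (\<Prod>j\<in>I-{k}. [:-W j, 1:])) \<le> n"
      using lin_prod[of "I - {k}" W] fin cardk
      by (metis (no_types, lifting) degree_smult_le finite_Diff order_trans)
  qed
  have c1: "coeff (\<Prod>j\<in>I-{k}. [:-W j, 1:]) n = 1" if "k \<in> I" for k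
    using lin_prod[of "I-{k}" W] fin cardk[OF that] by simp
  have cL: "coeff L n = (\<Sum>k\<in>I. c k)"
    unfolding L_def coeff_sum coeff_smult
    using c1 by (intro sum.cong) auto
  have pL: "poly L (W m) = poly r (W m)" if m: "m \<in> I" for m
  proof -
    have "poly L (W m) = (\<Sum>k\<in>I. c k * (\<Prod>j\<in>I-{k}. W m - W j))"
      unfolding L_def poly_sum poly_smult poly_prod by simp
    also have "\<dots> = c m * (\<Prod>j\<in>I-{m}. W m - W j) + (\<Sum>k\<in>I-{m}. c k * (\<Prod>j\<in>I-{k}. W m - W j))"
      by (rule sum.remove[OF fin m])
    also have "(\<Sum>k\<in>I-{m}. c k * (\<Prod>j\<in>I-{k}. W m - W j)) = 0"
      using fin m by (auto intro!: sum.neutral prod_zero)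
    also have "c m * (\<Prod>j\<in>I-{m}. W m - W j) + 0 = c m * (\<Prod>j\<in>I-{m}. W m - W j)" by simp
    also have "\<dots> = poly r (W m)"
    proof -
      have "(\<Prod>j\<in>I-{m}. W m - W j) \<noteq> 0"
        using inj m fin by (auto simp: inj_on_def)
      then show ?thesis by (simp add: c_def)
    qed
    finally show ?thesis .
  qed
  have "L - r = 0"
  proof (rule ccontr)
    assume ne: "L - r \<noteq> 0"
    have "W ` I \<subseteq> {x. poly (L - r) x = 0}" using pL by auto
    moreover have "finite {x. poly (L - r) x = 0}" using poly_roots_finite[OF ne] .
    ultimately have "card (W ` I) \<le> card {x. poly (L - r) x = 0}" by (rule card_mono[rotated])
    also have "\<dots> \<le> degree (L - r)" by (rule card_poly_roots_bound[OF ne])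
    also have "\<dots> \<le> n" using dL dr by (meson degree_diff_le)
    finally show False using card_image[OF inj] cI by simp
  qed
  then have "L = r" by simp
  then have "(\<Sum>k\<in>I. c k) = (\<Sum>i\<in>I. W i) - (\<Sum>i\<in>I. S i)" using cL cr by simp
  then show ?thesis unfolding c_def using polyr by (metis (no_types, lifting) sum.cong)
qed

lemma Wdiff:
  fixes A B u v :: complex
  assumes "A \<noteq> 0" "B \<noteq> 0" "u \<noteq> 0" "v \<noteq> 0"
  shows "(u/A + A/u) - (v/B + B/v) = (B*u - A*v)*(u*v - A*B)/(A*B*u*v)"
  using assms by (simp add: field_simps)

lemma WSdiff:
  fixes A u v :: complex
  assumes "A \<noteq> 0" "u \<noteq> 0" "v \<noteq> 0"
  shows "(u/A + A/u) - (v + 1/v) = (u - A*v)*(u*v - A)/(A*u*v)"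
  using assms by (simp add: field_simps)

lemma phiform_aux:
  fixes A B u v P1 P2 :: complex
  assumes "A \<noteq> 0" "B \<noteq> 0" "u \<noteq> 0" "v \<noteq> 0" "P1 \<noteq> 0" "P2 \<noteq> 0"
  shows "((u - A*v)*(u*v - A)/(A*u*v)) / (P1*P2/(A*B*u*v)) = B*(u - A*v)*(u*v - A)/(P1*P2)"
  using assms by (simp add: field_simps)

lemma phiform:
  fixes A B u v :: complex
  assumes "A \<noteq> 0" "B \<noteq> 0" "u \<noteq> 0" "v \<noteq> 0"
    "B*u - A*v \<noteq> 0" "u*v - A*B \<noteq> 0"
  shows "((u/A + A/u) - (v + 1/v))/((u/A + A/u) - (v/B + B/v))
     = B*(u - A*v)*(u*v - A)/((B*u - A*v)*(u*v - A*B))"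
  unfolding Wdiff[OF assms(1-4)] WSdiff[OF assms(1,3,4)]
  by (rule phiform_aux) (use assms in auto)

lemma phi1_aux:
  fixes Q A B u v P0 P1 P2 :: complex
  assumes "Q \<noteq> 0" "A \<noteq> 0" "B \<noteq> 0" "u \<noteq> 0" "v \<noteq> 0" "P0 \<noteq> 0" "P1 \<noteq> 0" "P2 \<noteq> 0"
  shows "(-(Q * (A*v/(B*Q*u))) / ((P0/(B*Q*u)) * (P1/(B*u)))) / Q
      * (((u - A*v)/u)*(-P0/(A*v))*((u*v - A)/(u*v))/(P2/(u*v)))
    = B*(u - A*v)*(u*v - A)/(P1*P2)"
  using assms by (simp add: field_simps)

lemma phi1:
  fixes Q A B u v :: complex
  assumes "Q \<noteq> 0" "A \<noteq> 0" "B \<noteq> 0" "u \<noteq> 0" "v \<noteq> 0"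
    "B*Q*u - A*v \<noteq> 0" "B*u - A*v \<noteq> 0" "u*v - A*B \<noteq> 0"
  shows "(-(Q * (A*v/(B*Q*u))) / ((1 - A*v/(B*Q*u)) * (1 - A*v/(B*u)))) / Q
      * ((1 - A*v/u)*(1 - B*Q/A*u/v)*(1 - A/(u*v))/(1 - A*B/(u*v)))
    = ((u/A + A/u) - (v + 1/v))/((u/A + A/u) - (v/B + B/v))"
proof -
  have e1: "1 - A*v/(B*Q*u) = (B*Q*u - A*v)/(B*Q*u)" using assms by (simp add: field_simps)
  have e2: "1 - A*v/(B*u) = (B*u - A*v)/(B*u)" using assms by (simp add: field_simps)
  have e3: "1 - A*B/(u*v) = (u*v - A*B)/(u*v)" using assms by (simp add: field_simps)
  have e5: "1 - B*Q/A*u/v = -(B*Q*u - A*v)/(A*v)" using assms by (simp add: field_simps)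
  have e6: "1 - A*v/u = (u - A*v)/u" using assms by (simp add: field_simps)
  have e7: "1 - A/(u*v) = (u*v - A)/(u*v)" using assms by (simp add: field_simps)
  show ?thesis unfolding phiform[OF assms(2-5,7,8)] e1 e2 e3 e5 e6 e7
    by (rule phi1_aux) (use assms in auto)
qed

lemma phi2_aux:
  fixes A B u v P1 P2 :: complex
  assumes "A \<noteq> 0" "B \<noteq> 0" "u \<noteq> 0" "v \<noteq> 0" "P1 \<noteq> 0" "P2 \<noteq> 0"
  shows "((u - A*v)/u) / (P1/(B*u)) * (((u*v - A)/(u*v)) / (P2/(u*v)))
    = B*(u - A*v)*(u*v - A)/(P1*P2)"
  using assms by (simp add: field_simps)

lemma phi2:
  fixes A B u v :: complex
  assumes "A \<noteq> 0" "B \<noteq> 0" "u \<noteq> 0" "v \<noteq> 0"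
    "B*u - A*v \<noteq> 0" "u*v - A*B \<noteq> 0"
  shows "(1 - A * v / u) / (1 - A/B * v / u) * ((1 - A/(v*u)) / (1 - B*A/(v*u)))
    = ((u/A + A/u) - (v + 1/v))/((u/A + A/u) - (v/B + B/v))"
proof -
  have e2: "1 - A/B*v/u = (B*u - A*v)/(B*u)" using assms by (simp add: field_simps)
  have e3: "1 - B*A/(v*u) = (u*v - A*B)/(u*v)" using assms by (simp add: field_simps)
  have e6: "1 - A*v/u = (u - A*v)/u" using assms by (simp add: field_simps)
  have e7: "1 - A/(v*u) = (u*v - A)/(u*v)" using assms by (simp add: field_simps)
  show ?thesis unfolding phiform[OF assms] e2 e3 e6 e7
    by (rule phi2_aux) (use assms in auto)
qed

definition Fk :: "nat \<Rightarrow> complex \<Rightarrow> (nat \<Rightarrow> complex) \<Rightarrow> nat \<Rightarrow> int \<Rightarrow> complex" where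
  "Fk N q s k x = q ^ ((N - k + 1) * nat x) / (qpoch q q (nat x) * qpoch (q / (s k)\<^sup>2) q (nat x))"

definition Gij :: "complex \<Rightarrow> (nat \<Rightarrow> complex) \<Rightarrow> nat \<Rightarrow> nat \<Rightarrow> int \<Rightarrow> int \<Rightarrow> complex" where
  "Gij q s i j x y = 1 / (qpoch (q * s j / s i) q (nat x)
               * qpoch (q powi (y - x) * q * s i / s j) q (nat x))
          * (qpoch (q / (s i * s j)) q (nat (x + y))
             / (qpoch (q / (s i * s j)) q (nat x) * qpoch (q / (s i * s j)) q (nat y)))"

lemma eBA_split:
  assumes "\<forall>k\<in>{1..N}. \<theta> k \<ge> 0"
  shows "eBA N \<theta> s q = (\<Prod>k\<in>{1..N}. Fk N q s k (\<theta> k)) * (\<Prod>i\<in>{1..N}. \<Prod>j\<in>{i+1..N}. Gij q s i j (\<theta> i) (\<theta> j))"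
  using assms unfolding eBA_def Fk_def Gij_def by (auto simp: not_less)

lemma F_aux:
  fixes X Y P R a b :: complex
  assumes "P \<noteq> 0" "R \<noteq> 0" "a \<noteq> 0" "b \<noteq> 0" "Y \<noteq> 0"
  shows "X / (P * R) = (X * Y) / ((P * a) * (R * b)) * (a * b / Y)"
  using assms by (simp add: field_simps)

lemma G1_aux:
  fixes P R C0 Cnm D a1 a2 a3 a4 :: complex
  assumes "P \<noteq> 0" "R \<noteq> 0" "C0 \<noteq> 0" "D \<noteq> 0" "a1 \<noteq> 0" "a2 \<noteq> 0" "a3 \<noteq> 0" "a4 \<noteq> 0"
  shows "1 / (P * R) * (Cnm / (C0 * D)) = 1 / ((P * a1) * (a2 * R)) * ((Cnm * a4) / ((C0 * a3) * D)) * (a1 * a2 * a3 / a4)"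
  using assms by (simp add: field_simps)

lemma G2_aux:
  fixes P R' Ro C0 Cmn D b1 b2 b3 b4 :: complex
  assumes "P \<noteq> 0" "R' \<noteq> 0" "C0 \<noteq> 0" "D \<noteq> 0" "b1 \<noteq> 0" "b2 \<noteq> 0" "b3 \<noteq> 0" "b4 \<noteq> 0"
    and rel: "Ro * b2 = R' * b1"
  shows "1 / (P * R') * (Cmn / (D * C0)) = 1 / (P * Ro) * ((Cmn * b4) / (D * (C0 * b3))) * (b1 / b2 * (b3 / b4))"
proof -
  have "Ro = R' * b1 / b2" using rel assms by (simp add: field_simps)
  then show ?thesis using assms by (simp add: field_simps)
qed

lemma prod_upd:
  fixes f f' :: "nat \<Rightarrow> complex"
  assumes "finite A" "k \<in> A" "\<forall>i\<in>A-{k}. f' i = f i" "f' k = f k * r"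
  shows "prod f' A = prod f A * r"
proof -
  have "prod f' A = f' k * prod f' (A - {k})" by (rule prod.remove[OF assms(1,2)])
  also have "prod f' (A - {k}) = prod f (A - {k})" using assms(3) by (intro prod.cong) auto
  also have "prod f A = f k * prod f (A - {k})" by (rule prod.remove[OF assms(1,2)])
  ultimately show ?thesis using assms(4) by (simp add: mult_ac)
qed

lemma double_prod_R:
  fixes b1 b2 :: "nat \<Rightarrow> complex"
  assumes k: "k \<in> {1..N}"
  shows "(\<Prod>i\<in>{1..N}. \<Prod>j\<in>{i+1..N}. (if i = k then b1 j else if j = k then b2 i else 1))
       = (\<Prod>j\<in>{k+1..N}. b1 j) * (\<Prod>i\<in>{1..k-1}. b2 i)"
proof -
  have inner: "(\<Prod>j\<in>{i+1..N}. (if i = k then b1 j else if j = k then b2 i else 1))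
     = (if i = k then (\<Prod>j\<in>{k+1..N}. b1 j) else 1) * (if i < k then b2 i else 1)" if i: "i \<in> {1..N}" for i
  proof (cases "i = k")
    case True then show ?thesis by simp
  next
    case False
    then have "(\<Prod>j\<in>{i+1..N}. (if i = k then b1 j else if j = k then b2 i else 1))
       = (\<Prod>j\<in>{i+1..N}. (if j = k then b2 i else 1))" by simp
    also have "\<dots> = (if k \<in> {i+1..N} then b2 i else 1)" by (rule prod.delta) simp
    also have "\<dots> = (if i < k then b2 i else 1)" using k False by auto
    finally show ?thesis using False by simp
  qed
  have "(\<Prod>i\<in>{1..N}. \<Prod>j\<in>{i+1..N}. (if i = k then b1 j else if j = k then b2 i else 1))
     = (\<Prod>i\<in>{1..N}. (if i = k then (\<Prod>j\<in>{k+1..N}. b1 j) else 1) * (if i < k then b2 i else 1))"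
    using inner by (rule prod.cong[OF refl])
  also have "\<dots> = (\<Prod>i\<in>{1..N}. (if i = k then (\<Prod>j\<in>{k+1..N}. b1 j) else 1)) * (\<Prod>i\<in>{1..N}. (if i < k then b2 i else 1))"
    by (rule prod.distrib)
  also have "(\<Prod>i\<in>{1..N}. (if i = k then (\<Prod>j\<in>{k+1..N}. b1 j) else 1)) = (\<Prod>j\<in>{k+1..N}. b1 j)"
    using k by (simp add: prod.delta)
  also have "(\<Prod>i\<in>{1..N}. (if i < k then b2 i else 1)) = (\<Prod>i\<in>{i\<in>{1..N}. i < k}. b2 i)"
    by (rule prod.inter_filter[symmetric]) simp
  also have "{i\<in>{1..N}. i < k} = {1..k-1}" using k by auto
  finally show ?thesis .
qed

lemma alg_ck:
  fixes q sN sk TN Tk P Dd :: complex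
  assumes "q \<noteq> 0" "sk \<noteq> 0" "TN \<noteq> 0" "Tk \<noteq> 0"
  shows "sN * ((-1)^(Suc M + 1) * (1/TN) * q^Suc M * P)/Dd = -q*sk/Tk * ((-(q*(Tk/(TN*q)*sN/sk)) * ((-q)^M * P))/Dd)"
proof -
  have m: "(-q)^M = (-1)^M * q^M" by (rule power_minus)
  show ?thesis unfolding m using assms by (simp add: field_simps)
qed

lemma cancel_q: fixes q Y b :: complex shows "q \<noteq> 0 \<Longrightarrow> Y * b = q * (Y / q * b)" by simp

lemma fin_alg:
  fixes q A u G P1 P2 Q F1 F2 E :: complex
  assumes "q \<noteq> 0" "A \<noteq> 0" "u \<noteq> 0" "Q \<noteq> 0" "G * P1 = Q * F1" "P2 = F2"
  shows "- q * u / A * G * (E * ((1 - A) * (1 - A / u\<^sup>2) / (Q * q) * P1 * P2))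
       = E * - ((u / A * (1 - A) * (1 - A / u\<^sup>2)) * (F2 * F1))"
proof -
  have "- q * u / A * G * (E * ((1 - A) * (1 - A / u\<^sup>2) / (Q * q) * P1 * P2))
      = - u / A * (1 - A) * (1 - A / u\<^sup>2) * E * P2 * ((G * P1) / Q)"
    using assms(1-4) by (simp add: field_simps)
  also have "\<dots> = E * - ((u / A * (1 - A) * (1 - A / u\<^sup>2)) * (F2 * F1))"
    unfolding assms(5,6) using assms(4) by simp
  finally show ?thesis .
qed

lemma ck_gen:
  fixes Z Dn :: "nat \<Rightarrow> complex" and t :: "nat \<Rightarrow> int" and q :: complex and s :: "nat \<Rightarrow> complex"
  assumes k1: "1 \<le> k" and kN: "k \<le> N" and q0: "q \<noteq> 0" and sk: "s k \<noteq> 0"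
    and zN: "k < N \<Longrightarrow> Z N = q powi (- t N + t k - 1) * s N / s k"
  shows "s N * ((-1) ^ (N - k + 1) * q powi (- t N + (if k = N then 1 else 0)) * q ^ (N - k)
             * (\<Prod>i\<in>{k+1..N-1}. Z i)) / (\<Prod>i\<in>{k+1..N}. Dn i)
     = - q * s k / q powi t k * ((\<Prod>j\<in>{k+1..N}. - (q * Z j)) / (\<Prod>j\<in>{k+1..N}. Dn j))"
proof (cases "k = N")
  case True
  have e: "q powi (- t N + 1) = q / q powi t N" using q0 by (subst power_int_add) (auto simp: power_int_minus field_simps)
  have e': "q powi (1 - t N) = q / q powi t N" using q0 by (subst power_int_diff) auto
  show ?thesis using True q0 by (simp add: e')
next
  case False
  then have kl: "k < N" using kN by simp
  define M where "M = N - k - 1"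
  have NM: "N - k = Suc M" "N - k + 1 = Suc (Suc M)" using kl unfolding M_def by auto
  have set: "{k+1..N} = insert N {k+1..N-1}" using kl by auto
  have cardM: "card {k+1..N-1} = M" unfolding M_def by simp
  define P where "P = (\<Prod>i\<in>{k+1..N-1}. Z i)"
  define Dd where "Dd = (\<Prod>j\<in>{k+1..N}. Dn j)"
  have pz: "(\<Prod>j\<in>{k+1..N}. - (q * Z j)) = - (q * Z N) * ((- q) ^ M * P)"
  proof -
    have "(\<Prod>j\<in>{k+1..N}. - (q * Z j)) = - (q * Z N) * (\<Prod>j\<in>{k+1..N-1}. - q * Z j)"
      unfolding set by (subst prod.insert) auto
    also have "(\<Prod>j\<in>{k+1..N-1}. - q * Z j) = (- q) ^ M * P"
      unfolding P_def prod.distrib cardM[symmetric] by simp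
    finally show ?thesis .
  qed
  have e1: "q powi (- t N) = 1 / q powi t N" by (simp add: power_int_minus field_simps)
  have e2: "q powi (- t N + t k - 1) = q powi t k / (q powi t N * q)"
    using q0 by (simp add: power_int_add power_int_diff power_int_minus field_simps)
  have Tk: "q powi t k \<noteq> 0" "q powi t N \<noteq> 0" using q0 by auto
  have if0: "(if k = N then 1 else 0) = (0::int)" using False by simp
  show ?thesis
    unfolding P_def[symmetric] Dd_def[symmetric] pz zN[OF kl] NM if0 add_0_right e1 e2
    by (rule alg_ck[OF q0 sk Tk(2) Tk(1)])
qed

definition Wf :: "complex \<Rightarrow> (nat \<Rightarrow> complex) \<Rightarrow> (nat \<Rightarrow> int) \<Rightarrow> nat \<Rightarrow> complex" where
  "Wf q s \<theta> i = s i / q powi \<theta> i + q powi \<theta> i / s i"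

definition Sf :: "(nat \<Rightarrow> complex) \<Rightarrow> nat \<Rightarrow> complex" where
  "Sf s i = s i + 1 / s i"

context
  fixes N :: nat and q :: complex and s :: "nat \<Rightarrow> complex"
  assumes q0: "q \<noteq> 0" and s0: "\<forall>i\<in>{1..N}. s i \<noteq> 0"
    and gen: "\<forall>(a::int) (b::nat \<Rightarrow> int). (a \<noteq> 0 \<or> (\<exists>i\<in>{1..N}. b i \<noteq> 0))
                   \<longrightarrow> q powi a * (\<Prod>i\<in>{1..N}. s i powi b i) \<noteq> 1"
begin

lemma gen1: "a \<noteq> 0 \<Longrightarrow> q powi a \<noteq> 1"
  using gen[rule_format, of a "\<lambda>_. 0"] by simp

lemma gen2: assumes "k \<in> {1..N}" "c \<noteq> 0" shows "q powi a * s k powi c \<noteq> 1"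
proof -
  have "(\<Prod>i\<in>{1..N}. s i powi (if i = k then c else 0)) = (\<Prod>i\<in>{1..N}. if i = k then s k powi c else 1)"
    by (intro prod.cong) auto
  also have "\<dots> = s k powi c" using assms by (simp add: prod.delta)
  finally show ?thesis using gen[rule_format, of a "\<lambda>i. if i = k then c else 0"] assms by auto
qed

lemma gen3: assumes "j \<in> {1..N}" "k \<in> {1..N}" "j \<noteq> k" "c \<noteq> 0"
  shows "q powi a * s j powi c * s k powi d \<noteq> 1"
proof -
  have "(\<Prod>i\<in>{1..N}. s i powi (if i = j then c else if i = k then d else 0))
      = (\<Prod>i\<in>{1..N}. (if i = j then s j powi c else 1) * (if i = k then s k powi d else 1))"
    using assms by (intro prod.cong) auto
  also have "\<dots> = s j powi c * s k powi d" using assms by (simp add: prod.distrib prod.delta)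
  finally have pe: "(\<Prod>i\<in>{1..N}. s i powi (if i = j then c else if i = k then d else 0)) = s j powi c * s k powi d" .
  have ex: "\<exists>i\<in>{1..N}. (if i = j then c else if i = k then d else 0) \<noteq> 0"
    using assms by (intro bexI[of _ j]) auto
  note gen[rule_format, OF disjI2[OF ex], of a]
  then show ?thesis using pe by (simp add: mult.assoc)
qed

lemma nz1: "a \<noteq> 0 \<Longrightarrow> X = q powi a \<Longrightarrow> 1 - X \<noteq> 0"
  using gen1 by auto
lemma nz2: "k \<in> {1..N} \<Longrightarrow> c \<noteq> 0 \<Longrightarrow> X = q powi a * s k powi c \<Longrightarrow> 1 - X \<noteq> 0"
  using gen2 by auto
lemma nz3: "j \<in> {1..N} \<Longrightarrow> k \<in> {1..N} \<Longrightarrow> j \<noteq> k \<Longrightarrow> c \<noteq> 0 \<Longrightarrow> X = q powi a * s j powi c * s k powi d \<Longrightarrow> 1 - X \<noteq> 0"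
  using gen3 by auto

lemma qpw1: "q powi (int c + 1) = q^c * q"
proof -
  have "int c + 1 = int (Suc c)" by simp
  then show ?thesis by (simp only: power_int_of_nat) (simp add: mult.commute)
qed

lemmas pws = qpw1 power_int_add power_int_diff power_int_minus

lemma F_step:
  assumes k: "k \<in> {1..N}"
  shows "Fk N q s k (int n) = Fk N q s k (int (Suc n))
     * ((1 - q powi int (Suc n)) * (1 - q powi int (Suc n) / (s k)\<^sup>2) / q ^ (N - k + 1))"
proof -
  let ?e = "N - k + 1"
  have a: "1 - q^n * q \<noteq> 0"
    by (rule nz1[of "int n + 1"]) (use q0 in \<open>auto simp: pws\<close>)
  have b: "1 - q^n * (q / (s k)\<^sup>2) \<noteq> 0"
    by (rule nz2[OF k, of "-2" _ "int n + 1"]) (use q0 s0 k in \<open>auto simp: pws field_simps\<close>)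
  have P: "qpoch q q n \<noteq> 0"
  proof (rule qpoch_nz, intro allI)
    fix c show "q^c * q \<noteq> 1" using nz1[of "int c + 1" "q^c * q"] q0 by (auto simp: pws)
  qed
  have R: "qpoch (q / (s k)\<^sup>2) q n \<noteq> 0"
  proof (rule qpoch_nz, intro allI)
    fix c show "q^c * (q / (s k)\<^sup>2) \<noteq> 1"
      using nz2[OF k, of "-2" "q^c * (q / (s k)\<^sup>2)" "int c + 1"] q0 s0 k by (auto simp: pws field_simps)
  qed
  have Y: "q ^ ?e \<noteq> 0" using q0 by simp
  have e1: "q ^ (?e * Suc n) = q ^ (?e * n) * q ^ ?e" by (simp add: power_add mult.commute)
  have e2: "q powi int (Suc n) = q^n * q" unfolding power_int_of_nat by (simp add: mult.commute)
  have e3: "q powi int (Suc n) / (s k)\<^sup>2 = q^n * (q / (s k)\<^sup>2)" using e2 by simp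
  show ?thesis
    unfolding Fk_def nat_int e1 qpoch_Suc e2
    using F_aux[OF P R a b Y] by simp
qed

lemma nz3': "j \<in> {1..N} \<Longrightarrow> k \<in> {1..N} \<Longrightarrow> j \<noteq> k \<Longrightarrow> c \<noteq> 0 \<Longrightarrow> X = q powi a * s j powi c * s k powi d \<Longrightarrow> X \<noteq> 1"
  using gen3 by auto

lemma G1_step:
  assumes k: "k \<in> {1..N}" and j: "j \<in> {1..N}" and kj: "k \<noteq> j"
  shows "Gij q s k j (int n) (int m) = Gij q s k j (int (Suc n)) (int m)
     * ((1 - q powi int (Suc n) * s j / s k) * (1 - q powi int m * q / q powi int (Suc n) * s k / s j)
        * (1 - q powi int (Suc n) / (s k * s j)) / (1 - q powi int (Suc n) * q powi int m / (s k * s j)))"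
proof -
  have jk: "j \<noteq> k" using kj by simp
  note sk = s0[rule_format, OF k] and sj = s0[rule_format, OF j]
  define P where "P = qpoch (q * s j / s k) q n"
  define R where "R = qpoch (q powi (int m - int n) * q * s k / s j) q n"
  define C0 where "C0 = qpoch (q / (s k * s j)) q n"
  define Cnm where "Cnm = qpoch (q / (s k * s j)) q (n + m)"
  define D where "D = qpoch (q / (s k * s j)) q m"
  define a1 where "a1 = 1 - q^n * (q * s j / s k)"
  define a2 where "a2 = 1 - q powi (int m - int (Suc n)) * q * s k / s j"
  define a3 where "a3 = 1 - q^n * (q / (s k * s j))"
  define a4 where "a4 = 1 - q^(n + m) * (q / (s k * s j))"
  have P0: "P \<noteq> 0" unfolding P_def
    by (rule qpoch_nz, intro allI, rule nz3'[OF j k jk, of 1 _ "int c + 1" "-1" for c]) (use q0 sk sj in \<open>auto simp: pws field_simps\<close>)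
  have R0: "R \<noteq> 0" unfolding R_def
    by (rule qpoch_nz, intro allI, rule nz3'[OF k j kj, of 1 _ "int c + int m - int n + 1" "-1" for c]) (use q0 sk sj in \<open>auto simp: pws field_simps\<close>)
  have C00: "C0 \<noteq> 0" unfolding C0_def
    by (rule qpoch_nz, intro allI, rule nz3'[OF k j kj, of "-1" _ "int c + 1" "-1" for c]) (use q0 sk sj in \<open>auto simp: pws field_simps\<close>)
  have D0: "D \<noteq> 0" unfolding D_def
    by (rule qpoch_nz, intro allI, rule nz3'[OF k j kj, of "-1" _ "int c + 1" "-1" for c]) (use q0 sk sj in \<open>auto simp: pws field_simps\<close>)
  have a10: "a1 \<noteq> 0" unfolding a1_def
    by (rule nz3[OF j k jk, of 1 _ "int n + 1" "-1"]) (use q0 sk sj in \<open>auto simp: pws field_simps\<close>)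
  have a20: "a2 \<noteq> 0" unfolding a2_def
    by (rule nz3[OF k j kj, of 1 _ "int m - int n" "-1"]) (use q0 sk sj in \<open>auto simp: pws field_simps\<close>)
  have a30: "a3 \<noteq> 0" unfolding a3_def
    by (rule nz3[OF k j kj, of "-1" _ "int n + 1" "-1"]) (use q0 sk sj in \<open>auto simp: pws field_simps\<close>)
  have a40: "a4 \<noteq> 0" unfolding a4_def
    by (rule nz3[OF k j kj, of "-1" _ "int n + int m + 1" "-1"]) (use q0 sk sj in \<open>auto simp: pws power_add field_simps\<close>)
  have g0: "Gij q s k j (int n) (int m) = 1 / (P * R) * (Cnm / (C0 * D))"
    unfolding Gij_def P_def R_def Cnm_def C0_def D_def by (simp add: nat_add_distrib)
  have sh: "q * (q powi (int m - int (Suc n)) * q * s k / s j) = q powi (int m - int n) * q * s k / s j"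
    using q0 by (simp add: pws field_simps)
  have g1: "Gij q s k j (int (Suc n)) (int m) = 1 / ((P * a1) * (a2 * R)) * ((Cnm * a4) / ((C0 * a3) * D))"
  proof -
    have nn: "nat (int (Suc n) + int m) = Suc (n + m)" by simp
    have r: "qpoch (q powi (int m - int (Suc n)) * q * s k / s j) q (Suc n)
       = (1 - q powi (int m - int (Suc n)) * q * s k / s j) * qpoch (q powi (int m - int n) * q * s k / s j) q n"
      unfolding qpoch_Suc' sh ..
    show ?thesis
      unfolding Gij_def P_def R_def Cnm_def C0_def D_def a1_def a2_def a3_def a4_def nat_int nn r
      by (simp only: qpoch_Suc)
  qed
  have fa: "a1 * a2 * a3 / a4 = (1 - q powi int (Suc n) * s j / s k) * (1 - q powi int m * q / q powi int (Suc n) * s k / s j)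
        * (1 - q powi int (Suc n) / (s k * s j)) / (1 - q powi int (Suc n) * q powi int m / (s k * s j))"
  proof -
    have A: "q powi int (Suc n) = q^n * q" unfolding power_int_of_nat by (simp add: mult.commute)
    have B: "q powi int m = q^m" by simp
    have AB: "q powi (int m - int (Suc n)) = q^m / (q^n * q)" using q0 A by (simp add: power_int_diff)
    show ?thesis unfolding a1_def a2_def a3_def a4_def A B AB using q0 by (simp add: power_add field_simps)
  qed
  show ?thesis unfolding g0 g1 fa[symmetric] by (rule G1_aux[OF P0 R0 C00 D0 a10 a20 a30 a40])
qed

lemma G2_step:
  assumes i: "i \<in> {1..N}" and k: "k \<in> {1..N}" and ik: "i \<noteq> k"
  shows "Gij q s i k (int m) (int n) = Gij q s i k (int m) (int (Suc n))
     * ((1 - q powi int (Suc n) * s i / s k) / (1 - q powi int (Suc n) / q powi int m * s i / s k)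
        * ((1 - q powi int (Suc n) / (s i * s k)) / (1 - q powi int m * q powi int (Suc n) / (s i * s k))))"
proof -
  have ki: "k \<noteq> i" using ik by simp
  note sk = s0[rule_format, OF k] and si = s0[rule_format, OF i]
  define P where "P = qpoch (q * s k / s i) q m"
  define R' where "R' = qpoch (q powi (int n - int m) * q * s i / s k) q m"
  define Ro where "Ro = qpoch (q powi (int (Suc n) - int m) * q * s i / s k) q m"
  define C0 where "C0 = qpoch (q / (s i * s k)) q n"
  define Cmn where "Cmn = qpoch (q / (s i * s k)) q (m + n)"
  define D where "D = qpoch (q / (s i * s k)) q m"
  define b1 where "b1 = 1 - q^m * (q powi (int n - int m) * q * s i / s k)"
  define b2 where "b2 = 1 - q powi (int n - int m) * q * s i / s k"
  define b3 where "b3 = 1 - q^n * (q / (s i * s k))"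
  define b4 where "b4 = 1 - q^(m + n) * (q / (s i * s k))"
  have P0: "P \<noteq> 0" unfolding P_def
    by (rule qpoch_nz, intro allI, rule nz3'[OF k i ki, of 1 _ "int c + 1" "-1" for c]) (use q0 sk si in \<open>auto simp: pws field_simps\<close>)
  have R0: "R' \<noteq> 0" unfolding R'_def
    by (rule qpoch_nz, intro allI, rule nz3'[OF i k ik, of 1 _ "int c + int n - int m + 1" "-1" for c]) (use q0 sk si in \<open>auto simp: pws field_simps\<close>)
  have C00: "C0 \<noteq> 0" unfolding C0_def
    by (rule qpoch_nz, intro allI, rule nz3'[OF i k ik, of "-1" _ "int c + 1" "-1" for c]) (use q0 sk si in \<open>auto simp: pws field_simps\<close>)
  have D0: "D \<noteq> 0" unfolding D_def
    by (rule qpoch_nz, intro allI, rule nz3'[OF i k ik, of "-1" _ "int c + 1" "-1" for c]) (use q0 sk si in \<open>auto simp: pws field_simps\<close>)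
  have b10: "b1 \<noteq> 0" unfolding b1_def
    by (rule nz3[OF i k ik, of 1 _ "int n + 1" "-1"]) (use q0 sk si in \<open>auto simp: pws field_simps\<close>)
  have b20: "b2 \<noteq> 0" unfolding b2_def
    by (rule nz3[OF i k ik, of 1 _ "int n - int m + 1" "-1"]) (use q0 sk si in \<open>auto simp: pws field_simps\<close>)
  have b30: "b3 \<noteq> 0" unfolding b3_def
    by (rule nz3[OF i k ik, of "-1" _ "int n + 1" "-1"]) (use q0 sk si in \<open>auto simp: pws field_simps\<close>)
  have b40: "b4 \<noteq> 0" unfolding b4_def
    by (rule nz3[OF i k ik, of "-1" _ "int m + int n + 1" "-1"]) (use q0 sk si in \<open>auto simp: pws power_add field_simps\<close>)
  have sh: "q * (q powi (int n - int m) * q * s i / s k) = q powi (int (Suc n) - int m) * q * s i / s k"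
    using q0 by (simp add: pws field_simps)
  have rel: "Ro * b2 = R' * b1"
  proof -
    have "qpoch (q powi (int n - int m) * q * s i / s k) q (Suc m) = R' * b1"
      unfolding qpoch_Suc R'_def b1_def ..
    moreover have "qpoch (q powi (int n - int m) * q * s i / s k) q (Suc m) = b2 * Ro"
      unfolding qpoch_Suc' sh b2_def Ro_def ..
    ultimately show ?thesis by (simp add: mult.commute)
  qed
  have g0: "Gij q s i k (int m) (int n) = 1 / (P * R') * (Cmn / (D * C0))"
    unfolding Gij_def P_def R'_def Cmn_def C0_def D_def by (simp add: nat_add_distrib)
  have g1: "Gij q s i k (int m) (int (Suc n)) = 1 / (P * Ro) * ((Cmn * b4) / (D * (C0 * b3)))"
  proof -
    have nn: "nat (int m + int (Suc n)) = Suc (m + n)" by simp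
    show ?thesis
      unfolding Gij_def P_def Ro_def Cmn_def C0_def D_def b3_def b4_def nat_int nn
      by (simp only: qpoch_Suc)
  qed
  have fb: "b1 / b2 * (b3 / b4) = (1 - q powi int (Suc n) * s i / s k) / (1 - q powi int (Suc n) / q powi int m * s i / s k)
        * ((1 - q powi int (Suc n) / (s i * s k)) / (1 - q powi int m * q powi int (Suc n) / (s i * s k)))"
  proof -
    have A: "q powi int (Suc n) = q^n * q" unfolding power_int_of_nat by (simp add: mult.commute)
    have B: "q powi int m = q^m" by simp
    have AB: "q powi (int n - int m) = q^n / q^m" using q0 by (simp add: power_int_diff)
    show ?thesis unfolding b1_def b2_def b3_def b4_def A B AB using q0 by (simp add: power_add field_simps)
  qed
  show ?thesis unfolding g0 g1 fb[symmetric] by (rule G2_aux[OF P0 R0 C00 D0 b10 b20 b30 b40 rel])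
qed

lemma step:
  assumes nn: "\<forall>i\<in>{1..N}. \<theta> i \<ge> 0" and k: "k \<in> {1..N}" and pos: "\<theta> k \<ge> 1"
  shows "eBA N (\<theta>(k := \<theta> k - 1)) s q = eBA N \<theta> s q *
     ((1 - q powi \<theta> k) * (1 - q powi \<theta> k / (s k)\<^sup>2) / q ^ (N - k + 1)
      * (\<Prod>j\<in>{k+1..N}. (1 - q powi \<theta> k * s j / s k) * (1 - q powi \<theta> j * q / q powi \<theta> k * s k / s j)
           * (1 - q powi \<theta> k / (s k * s j)) / (1 - q powi \<theta> k * q powi \<theta> j / (s k * s j)))
      * (\<Prod>i\<in>{1..k-1}. (1 - q powi \<theta> k * s i / s k) / (1 - q powi \<theta> k / q powi \<theta> i * s i / s k)
           * ((1 - q powi \<theta> k / (s i * s k)) / (1 - q powi \<theta> i * q powi \<theta> k / (s i * s k)))))"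
proof -
  define n where "n = nat (\<theta> k - 1)"
  have tk: "\<theta> k = int (Suc n)" using pos unfolding n_def by simp
  define \<theta>' where "\<theta>' = \<theta>(k := \<theta> k - 1)"
  have tk': "\<theta>' k = int n" unfolding \<theta>'_def using tk by simp
  have nn': "\<forall>i\<in>{1..N}. \<theta>' i \<ge> 0" using nn tk unfolding \<theta>'_def by auto
  have ti: "\<theta> i = int (nat (\<theta> i))" if "i \<in> {1..N}" for i using nn that by simp
  define b1 where "b1 j = (1 - q powi \<theta> k * s j / s k) * (1 - q powi \<theta> j * q / q powi \<theta> k * s k / s j)
           * (1 - q powi \<theta> k / (s k * s j)) / (1 - q powi \<theta> k * q powi \<theta> j / (s k * s j))" for j
  define b2 where "b2 i = (1 - q powi \<theta> k * s i / s k) / (1 - q powi \<theta> k / q powi \<theta> i * s i / s k)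
           * ((1 - q powi \<theta> k / (s i * s k)) / (1 - q powi \<theta> i * q powi \<theta> k / (s i * s k)))" for i
  define al where "al = (1 - q powi \<theta> k) * (1 - q powi \<theta> k / (s k)\<^sup>2) / q ^ (N - k + 1)"
  have Fp: "(\<Prod>i\<in>{1..N}. Fk N q s i (\<theta>' i)) = (\<Prod>i\<in>{1..N}. Fk N q s i (\<theta> i)) * al"
  proof (rule prod_upd[OF _ k])
    show "\<forall>i\<in>{1..N} - {k}. Fk N q s i (\<theta>' i) = Fk N q s i (\<theta> i)" unfolding \<theta>'_def by auto
    show "Fk N q s k (\<theta>' k) = Fk N q s k (\<theta> k) * al"
      unfolding tk' al_def tk by (rule F_step[OF k])
  qed simp
  have Gp: "Gij q s i j (\<theta>' i) (\<theta>' j) = Gij q s i j (\<theta> i) (\<theta> j) * (if i = k then b1 j else if j = k then b2 i else 1)"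
    if i: "i \<in> {1..N}" and j: "j \<in> {i+1..N}" for i j
  proof -
    have j': "j \<in> {1..N}" using j i by auto
    consider "i = k" | "j = k" | "i \<noteq> k \<and> j \<noteq> k" by blast
    then show ?thesis
    proof cases
      case 1
      then have jk: "j \<noteq> k" using j by auto
      have "Gij q s k j (int n) (int (nat (\<theta> j))) = Gij q s k j (int (Suc n)) (int (nat (\<theta> j))) * b1 j"
        unfolding b1_def tk using G1_step[OF k j' jk[symmetric], of n "nat (\<theta> j)"] ti[OF j'] by simp
      then show ?thesis using 1 jk tk' ti[OF j'] tk unfolding \<theta>'_def by simp
    next
      case 2
      then have ik: "i \<noteq> k" using j by auto
      have "Gij q s i k (int (nat (\<theta> i))) (int n) = Gij q s i k (int (nat (\<theta> i))) (int (Suc n)) * b2 i"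
        unfolding b2_def tk using G2_step[OF i k ik, of "nat (\<theta> i)" n] ti[OF i] by simp
      then show ?thesis using 2 ik tk' ti[OF i] tk unfolding \<theta>'_def by simp
    next
      case 3
      then show ?thesis unfolding \<theta>'_def by simp
    qed
  qed
  have Gpp: "(\<Prod>i\<in>{1..N}. \<Prod>j\<in>{i+1..N}. Gij q s i j (\<theta>' i) (\<theta>' j))
     = (\<Prod>i\<in>{1..N}. \<Prod>j\<in>{i+1..N}. Gij q s i j (\<theta> i) (\<theta> j)) * ((\<Prod>j\<in>{k+1..N}. b1 j) * (\<Prod>i\<in>{1..k-1}. b2 i))"
  proof -
    have "(\<Prod>i\<in>{1..N}. \<Prod>j\<in>{i+1..N}. Gij q s i j (\<theta>' i) (\<theta>' j))
       = (\<Prod>i\<in>{1..N}. \<Prod>j\<in>{i+1..N}. Gij q s i j (\<theta> i) (\<theta> j) * (if i = k then b1 j else if j = k then b2 i else 1))"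
      using Gp by (intro prod.cong refl) auto
    also have "\<dots> = (\<Prod>i\<in>{1..N}. \<Prod>j\<in>{i+1..N}. Gij q s i j (\<theta> i) (\<theta> j))
        * (\<Prod>i\<in>{1..N}. \<Prod>j\<in>{i+1..N}. (if i = k then b1 j else if j = k then b2 i else 1))"
      by (simp add: prod.distrib)
    also have "(\<Prod>i\<in>{1..N}. \<Prod>j\<in>{i+1..N}. (if i = k then b1 j else if j = k then b2 i else 1))
       = (\<Prod>j\<in>{k+1..N}. b1 j) * (\<Prod>i\<in>{1..k-1}. b2 i)"
      by (rule double_prod_R[OF k])
    finally show ?thesis .
  qed
  show ?thesis
    unfolding \<theta>'_def[symmetric] eBA_split[OF nn] eBA_split[OF nn'] Fp Gpp
    unfolding al_def b1_def b2_def by (simp add: mult_ac)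
qed

lemma nzW:
  assumes j: "j \<in> {1..N}" and k: "k \<in> {1..N}" and jk: "j \<noteq> k"
  shows "q powi y * s k - q powi x * s j \<noteq> 0"
proof
  assume h: "q powi y * s k - q powi x * s j = 0"
  have "q powi (x - y) * s j powi 1 * s k powi (-1) \<noteq> 1" by (rule gen3[OF j k jk]) simp
  moreover have "q powi (x - y) * s j powi 1 * s k powi (-1) = q powi x * s j / (q powi y * s k)"
    using q0 by (simp add: power_int_diff power_int_minus field_simps)
  moreover have "q powi x * s j = q powi y * s k" using h by simp
  ultimately show False using q0 s0 k by simp
qed

lemma nzW2:
  assumes j: "j \<in> {1..N}" and k: "k \<in> {1..N}" and jk: "j \<noteq> k"
  shows "s k * s j - q powi x * q powi y \<noteq> 0"
proof
  assume h: "s k * s j - q powi x * q powi y = 0"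
  have "q powi (x + y) * s j powi (-1) * s k powi (-1) \<noteq> 1" by (rule gen3[OF j k jk]) simp
  moreover have "q powi (x + y) * s j powi (-1) * s k powi (-1) = q powi x * q powi y / (s k * s j)"
    using q0 by (simp add: power_int_add power_int_minus field_simps)
  moreover have "q powi x * q powi y = s k * s j" using h by simp
  ultimately show False using q0 s0 k j by simp
qed

lemma nzW3:
  assumes j: "j \<in> {1..N}" and k: "k \<in> {1..N}" and jk: "j \<noteq> k"
  shows "q powi y * q * s k - q powi x * s j \<noteq> 0"
proof -
  have "q powi (y + 1) = q powi y * q" using q0 by (simp add: power_int_add)
  then show ?thesis using nzW[OF j k jk, of "y + 1" x] by simp
qed

lemma Winj: "inj_on (Wf q s \<theta>) {1..N}"
proof (rule inj_onI, rule ccontr)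
  fix k j assume k: "k \<in> {1..N}" and j: "j \<in> {1..N}" and eq: "Wf q s \<theta> k = Wf q s \<theta> j" and kj: "k \<noteq> j"
  have "Wf q s \<theta> k - Wf q s \<theta> j = (q powi \<theta> j * s k - q powi \<theta> k * s j) * (s k * s j - q powi \<theta> k * q powi \<theta> j)
      / (q powi \<theta> k * q powi \<theta> j * s k * s j)"
    unfolding Wf_def by (rule Wdiff) (use q0 s0 k j in auto)
  moreover have "(q powi \<theta> j * s k - q powi \<theta> k * s j) \<noteq> 0" by (rule nzW[OF j k kj[symmetric]])
  moreover have "(s k * s j - q powi \<theta> k * q powi \<theta> j) \<noteq> 0" by (rule nzW2[OF j k kj[symmetric]])
  moreover have "q powi \<theta> k * q powi \<theta> j * s k * s j \<noteq> 0" using q0 s0 k j by simp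
  ultimately show False using eq q0 by simp
qed

lemma term_k:
  assumes nn: "\<forall>i\<in>{1..N}. \<theta> i \<ge> 0" and k: "k \<in> {1..N}"
  shows "s N * ((-1) ^ (N - k + 1) * q powi (- \<theta> N + (if k = N then 1 else 0)) * q ^ (N - k)
             * (\<Prod>i\<in>{k+1..N-1}. q powi (- \<theta> i + \<theta> k - 1) * s i / s k))
            / (\<Prod>i\<in>{k+1..N}. (1 - q powi (- \<theta> i + \<theta> k - 1) * s i / s k)
                               * (1 - q * q powi (- \<theta> i + \<theta> k - 1) * s i / s k))
            * eBA N (\<theta>(k := \<theta> k - 1)) s q
       = eBA N \<theta> s q * (- (\<Prod>j\<in>{1..N}. Wf q s \<theta> k - Sf s j) / (\<Prod>j\<in>{1..N}-{k}. Wf q s \<theta> k - Wf q s \<theta> j))"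
proof -
  define Z where "Z i = q powi (- \<theta> i + \<theta> k - 1) * s i / s k" for i
  define Dn where "Dn i = (1 - q powi (- \<theta> i + \<theta> k - 1) * s i / s k)
                               * (1 - q * q powi (- \<theta> i + \<theta> k - 1) * s i / s k)" for i
  note sk = s0[rule_format, OF k]
  have k1: "1 \<le> k" "k \<le> N" using k by auto
  have cform: "s N * ((-1) ^ (N - k + 1) * q powi (- \<theta> N + (if k = N then 1 else 0)) * q ^ (N - k)
             * (\<Prod>i\<in>{k+1..N-1}. Z i)) / (\<Prod>i\<in>{k+1..N}. Dn i)
     = - q * s k / q powi \<theta> k * (\<Prod>j\<in>{k+1..N}. - (q * Z j) / Dn j)"
    unfolding prod_dividef
    by (rule ck_gen[where k=k and N=N and q=q and s=s and Z=Z and t=\<theta> and Dn=Dn, OF k1 q0 sk]) (simp add: Z_def)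
  define R where "R = - (\<Prod>j\<in>{1..N}. Wf q s \<theta> k - Sf s j) / (\<Prod>j\<in>{1..N}-{k}. Wf q s \<theta> k - Wf q s \<theta> j)"
  have main: "- q * s k / q powi \<theta> k * (\<Prod>j\<in>{k+1..N}. - (q * Z j) / Dn j) * eBA N (\<theta>(k := \<theta> k - 1)) s q
      = eBA N \<theta> s q * R"
  proof (cases "\<theta> k = 0")
    case True
    have e0: "eBA N (\<theta>(k := \<theta> k - 1)) s q = 0"
      unfolding eBA_def using k True by auto
    have "Wf q s \<theta> k - Sf s k = 0" unfolding Wf_def Sf_def using True by simp
    then have "(\<Prod>j\<in>{1..N}. Wf q s \<theta> k - Sf s j) = 0" using k by (intro prod_zero) auto
    then show ?thesis unfolding R_def e0 by simp
  next
    case False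
    then have pos: "\<theta> k \<ge> 1" using nn k by force
    define A where "A = q powi \<theta> k"
    have A0: "A \<noteq> 0" unfolding A_def using q0 by simp
    define \<phi> where "\<phi> j = (Wf q s \<theta> k - Sf s j) / (Wf q s \<theta> k - Wf q s \<theta> j)" for j
    define b1 where "b1 j = (1 - q powi \<theta> k * s j / s k) * (1 - q powi \<theta> j * q / q powi \<theta> k * s k / s j)
           * (1 - q powi \<theta> k / (s k * s j)) / (1 - q powi \<theta> k * q powi \<theta> j / (s k * s j))" for j
    define b2 where "b2 i = (1 - q powi \<theta> k * s i / s k) / (1 - q powi \<theta> k / q powi \<theta> i * s i / s k)
           * ((1 - q powi \<theta> k / (s i * s k)) / (1 - q powi \<theta> i * q powi \<theta> k / (s i * s k)))" for i
    define al where "al = (1 - q powi \<theta> k) * (1 - q powi \<theta> k / (s k)\<^sup>2) / q ^ (N - k + 1)"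
    have st: "eBA N (\<theta>(k := \<theta> k - 1)) s q = eBA N \<theta> s q * (al * (\<Prod>j\<in>{k+1..N}. b1 j) * (\<Prod>i\<in>{1..k-1}. b2 i))"
      unfolding al_def b1_def b2_def by (rule step[OF nn k pos])
    have g1: "- (q * Z j) / Dn j * b1 j = q * \<phi> j" if j: "j \<in> {k+1..N}" for j
    proof -
      have j': "j \<in> {1..N}" and jk: "j \<noteq> k" using j k by auto
      note sj = s0[rule_format, OF j']
      have B0: "q powi \<theta> j \<noteq> 0" using q0 by simp
      have z1: "q powi (- \<theta> j + \<theta> k - 1) * s j / s k = q powi \<theta> k * s j / (q powi \<theta> j * q * s k)"
        using q0 by (simp add: power_int_add power_int_diff power_int_minus field_simps)
      have z2: "q * q powi (- \<theta> j + \<theta> k - 1) * s j / s k = q powi \<theta> k * s j / (q powi \<theta> j * s k)"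
        using q0 by (simp add: power_int_add power_int_diff power_int_minus field_simps)
      have ph: "(- (q * (q powi \<theta> k * s j / (q powi \<theta> j * q * s k))) / ((1 - q powi \<theta> k * s j / (q powi \<theta> j * q * s k))
               * (1 - q powi \<theta> k * s j / (q powi \<theta> j * s k)))) / q * b1 j = \<phi> j"
        unfolding b1_def \<phi>_def Wf_def Sf_def
        by (rule phi1[OF q0 _ B0 sk sj nzW3[OF j' k jk] nzW[OF j' k jk] nzW2[OF j' k jk]]) (use q0 in simp)
      have zz: "- (q * Z j) / Dn j = - (q * (q powi \<theta> k * s j / (q powi \<theta> j * q * s k))) / ((1 - q powi \<theta> k * s j / (q powi \<theta> j * q * s k))
               * (1 - q powi \<theta> k * s j / (q powi \<theta> j * s k)))"
        unfolding Z_def Dn_def z2 z1 ..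
      show ?thesis
        apply (subst zz) apply (subst ph[symmetric]) by (rule cancel_q[OF q0])
    qed
    have g2: "b2 i = \<phi> i" if i: "i \<in> {1..k-1}" for i
    proof -
      have i': "i \<in> {1..N}" and ik: "i \<noteq> k" using i k by auto
      note si = s0[rule_format, OF i']
      have B0: "q powi \<theta> i \<noteq> 0" using q0 by simp
      show ?thesis
        unfolding b2_def \<phi>_def Wf_def Sf_def
        by (rule phi2[OF _ B0 sk si nzW[OF i' k ik] nzW2[OF i' k ik]]) (use q0 in simp)
    qed
    have P1: "(\<Prod>j\<in>{k+1..N}. - (q * Z j) / Dn j) * (\<Prod>j\<in>{k+1..N}. b1 j) = q ^ (N - k) * (\<Prod>j\<in>{k+1..N}. \<phi> j)"
    proof -
      have "(\<Prod>j\<in>{k+1..N}. - (q * Z j) / Dn j) * (\<Prod>j\<in>{k+1..N}. b1 j) = (\<Prod>j\<in>{k+1..N}. - (q * Z j) / Dn j * b1 j)"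
        by (rule prod.distrib[symmetric])
      also have "\<dots> = (\<Prod>j\<in>{k+1..N}. q * \<phi> j)" using g1 by (rule prod.cong[OF refl])
      also have "\<dots> = q ^ (N - k) * (\<Prod>j\<in>{k+1..N}. \<phi> j)" by (simp add: prod.distrib)
      finally show ?thesis .
    qed
    have P2: "(\<Prod>i\<in>{1..k-1}. b2 i) = (\<Prod>i\<in>{1..k-1}. \<phi> i)" using g2 by (rule prod.cong[OF refl])
    have split: "{1..N} - {k} = {1..k-1} \<union> {k+1..N}" using k by auto
    have Phi: "(\<Prod>j\<in>{1..N}-{k}. \<phi> j) = (\<Prod>i\<in>{1..k-1}. \<phi> i) * (\<Prod>j\<in>{k+1..N}. \<phi> j)"
      unfolding split by (rule prod.union_disjoint) auto
    have Rf: "R = - ((Wf q s \<theta> k - Sf s k) * (\<Prod>j\<in>{1..N}-{k}. \<phi> j))"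
    proof -
      have "(\<Prod>j\<in>{1..N}. Wf q s \<theta> k - Sf s j) = (Wf q s \<theta> k - Sf s k) * (\<Prod>j\<in>{1..N}-{k}. Wf q s \<theta> k - Sf s j)"
        by (rule prod.remove) (use k in auto)
      then show ?thesis unfolding R_def \<phi>_def prod_dividef by simp
    qed
    have WS: "Wf q s \<theta> k - Sf s k = s k / A * (1 - A) * (1 - A / (s k)\<^sup>2)"
      unfolding Wf_def Sf_def A_def[symmetric] using A0 sk by (simp add: field_simps power2_eq_square)
    have qq: "q ^ (N - k + 1) = q ^ (N - k) * q" by simp
    show ?thesis
      unfolding st Rf Phi WS al_def A_def[symmetric] qq
      by (rule fin_alg[OF q0 A0 sk _ P1 P2]) (use q0 in simp)
  qed
  note cf = cform[unfolded Z_def Dn_def]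
  note mn = main[unfolded R_def Z_def Dn_def]
  show ?thesis by (subst cf) (rule mn)
qed

end

theorem proposition3p2:
  fixes N :: nat and q :: complex and s :: "nat \<Rightarrow> complex" and \<theta> :: "nat \<Rightarrow> int"
  assumes "N \<ge> 1"
    and "q \<noteq> 0" and "\<forall>i\<in>{1..N}. s i \<noteq> 0"
    and generic: "\<forall>(a::int) (b::nat \<Rightarrow> int). (a \<noteq> 0 \<or> (\<exists>i\<in>{1..N}. b i \<noteq> 0))
                   \<longrightarrow> q powi a * (\<Prod>i\<in>{1..N}. s i powi b i) \<noteq> 1"
    and "\<forall>i\<in>{1..N}. \<theta> i \<ge> 0"
  shows "(\<Sum>i\<in>{1..N}. (1 - q powi (- \<theta> i)) * s i + (1 - q powi (\<theta> i)) / s i) * eBA N \<theta> s q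
       = (\<Sum>k\<in>{1..N}. s N *
            ((-1) ^ (N - k + 1) * q powi (- \<theta> N + (if k = N then 1 else 0)) * q ^ (N - k)
             * (\<Prod>i\<in>{k+1..N-1}. q powi (- \<theta> i + \<theta> k - 1) * s i / s k))
            / (\<Prod>i\<in>{k+1..N}. (1 - q powi (- \<theta> i + \<theta> k - 1) * s i / s k)
                               * (1 - q * q powi (- \<theta> i + \<theta> k - 1) * s i / s k))
            * eBA N (\<theta>(k := \<theta> k - 1)) s q)"
proof -
  note q0 = assms(2) and s0 = assms(3) and nn = assms(5)
  have lhs: "(\<Sum>i\<in>{1..N}. (1 - q powi (- \<theta> i)) * s i + (1 - q powi (\<theta> i)) / s i)
      = (\<Sum>i\<in>{1..N}. Sf s i) - (\<Sum>i\<in>{1..N}. Wf q s \<theta> i)"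
  proof -
    have "(\<Sum>i\<in>{1..N}. (1 - q powi (- \<theta> i)) * s i + (1 - q powi (\<theta> i)) / s i)
        = (\<Sum>i\<in>{1..N}. Sf s i - Wf q s \<theta> i)"
    proof (rule sum.cong[OF refl])
      fix i assume i: "i \<in> {1..N}"
      have "s i \<noteq> 0" "q powi \<theta> i \<noteq> 0" using s0 i q0 by auto
      then show "(1 - q powi (- \<theta> i)) * s i + (1 - q powi (\<theta> i)) / s i = Sf s i - Wf q s \<theta> i"
        unfolding Sf_def Wf_def by (simp add: power_int_minus field_simps)
    qed
    then show ?thesis by (simp add: sum_subtractf)
  qed
  have rhs: "(\<Sum>k\<in>{1..N}. s N *
            ((-1) ^ (N - k + 1) * q powi (- \<theta> N + (if k = N then 1 else 0)) * q ^ (N - k)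
             * (\<Prod>i\<in>{k+1..N-1}. q powi (- \<theta> i + \<theta> k - 1) * s i / s k))
            / (\<Prod>i\<in>{k+1..N}. (1 - q powi (- \<theta> i + \<theta> k - 1) * s i / s k)
                               * (1 - q * q powi (- \<theta> i + \<theta> k - 1) * s i / s k))
            * eBA N (\<theta>(k := \<theta> k - 1)) s q)
      = (\<Sum>k\<in>{1..N}. eBA N \<theta> s q * (- (\<Prod>j\<in>{1..N}. Wf q s \<theta> k - Sf s j) / (\<Prod>j\<in>{1..N}-{k}. Wf q s \<theta> k - Wf q s \<theta> j)))"
    by (rule sum.cong[OF refl]) (rule term_k[OF q0 s0 generic nn])
  also have "\<dots> = eBA N \<theta> s q * - (\<Sum>k\<in>{1..N}. (\<Prod>j\<in>{1..N}. Wf q s \<theta> k - Sf s j) / (\<Prod>j\<in>{1..N}-{k}. Wf q s \<theta> k - Wf q s \<theta> j))"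
    by (simp add: sum_distrib_left sum_negf)
  also have "(\<Sum>k\<in>{1..N}. (\<Prod>j\<in>{1..N}. Wf q s \<theta> k - Sf s j) / (\<Prod>j\<in>{1..N}-{k}. Wf q s \<theta> k - Wf q s \<theta> j))
      = (\<Sum>i\<in>{1..N}. Wf q s \<theta> i) - (\<Sum>i\<in>{1..N}. Sf s i)"
    by (rule lagrange_sum[OF _ Winj[OF q0 s0 generic]]) simp
  finally have r: "(\<Sum>k\<in>{1..N}. s N *
            ((-1) ^ (N - k + 1) * q powi (- \<theta> N + (if k = N then 1 else 0)) * q ^ (N - k)
             * (\<Prod>i\<in>{k+1..N-1}. q powi (- \<theta> i + \<theta> k - 1) * s i / s k))
            / (\<Prod>i\<in>{k+1..N}. (1 - q powi (- \<theta> i + \<theta> k - 1) * s i / s k)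
                               * (1 - q * q powi (- \<theta> i + \<theta> k - 1) * s i / s k))
            * eBA N (\<theta>(k := \<theta> k - 1)) s q)
      = eBA N \<theta> s q * - ((\<Sum>i\<in>{1..N}. Wf q s \<theta> i) - (\<Sum>i\<in>{1..N}. Sf s i))" .
  show ?thesis unfolding lhs r by (simp add: algebra_simps)
qed

end
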